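(* For any integer $t>0$, any integer-valued function $f$ with $f(n)\in O(n^t)$, and any desired bound $\varepsilon_{\mathrm{premature}}>0$, there exists a (two-way) probabilistic finite automaton whose expected runtime on inputs of length $n$ is in $O(n^{t+1})$, and such that, on every input of length $n$, the probability that this machine halts in fewer than $f(n)$ time-steps is at most $\varepsilon_{\mathrm{premature}}$.
   Context: A (two-way) probabilistic finite automaton is a finite-state machine with a single read-only head on an input tape containing $\rhd w\lhd$ (with $\rhd,\lhd$ end-markers), starting on $\rhd$, which in each step may flip a fair coin and, depending on its state, the scanned symbol and the coin outcome, changes state and moves its head one cell left, right, or not at all; it has no work tape and no interaction with any other party. $n$ denotes the length of the input string $w$. *)

theory Defs
  imports "HOL-Probability.Probability" "HOL-Library.Landau_Symbols"
begin

datatype 'a tsym = LEnd | REnd | Sym 'a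

text \<open>The transition function takes the current state, scanned symbol and the
  outcome of a fair coin flip, and returns the new state and a head move
  in {-1,0,1}.\<close>
record 'a pfa =
  states :: "nat set"
  init   :: nat
  halting :: "nat set"
  delta  :: "nat \<Rightarrow> 'a tsym \<Rightarrow> bool \<Rightarrow> nat \<times> int"

definition valid_pfa :: "'a pfa \<Rightarrow> bool" where
  "valid_pfa M \<longleftrightarrow>
     finite (states M) \<and> init M \<in> states M \<and> halting M \<subseteq> states M \<and>
     (\<forall>q\<in>states M. \<forall>s b. fst (delta M q s b) \<in> states M
         \<and> snd (delta M q s b) \<in> {-1, 0, 1}) \<and>
     (\<forall>q\<in>states M. \<forall>b. snd (delta M q LEnd b) \<noteq> -1) \<and>
     (\<forall>q\<in>states M. \<forall>b. snd (delta M q REnd b) \<noteq> 1)"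

definition tape :: "'a list \<Rightarrow> nat \<Rightarrow> 'a tsym" where
  "tape w i = (if i = 0 then LEnd else if i \<le> length w then Sym (w ! (i - 1)) else REnd)"

text \<open>One step on configuration (state, head position); halting configurations are absorbing.\<close>
definition step :: "'a pfa \<Rightarrow> 'a list \<Rightarrow> nat \<times> nat \<Rightarrow> (nat \<times> nat) pmf" where
  "step M w c = (if fst c \<in> halting M then return_pmf c
     else map_pmf (\<lambda>b. let r = delta M (fst c) (tape w (snd c)) b
                        in (fst r, nat (int (snd c) + snd r))) (bernoulli_pmf (1/2)))"

fun run :: "'a pfa \<Rightarrow> 'a list \<Rightarrow> nat \<Rightarrow> (nat \<times> nat) pmf" where
  "run M w 0 = return_pmf (init M, 0)"
| "run M w (Suc k) = bind_pmf (run M w k) (step M w)"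

text \<open>Probability that the machine has halted within k steps, i.e. Pr[T \<le> k],
  where T is the (possibly infinite) halting time.\<close>
definition halt_within :: "'a pfa \<Rightarrow> 'a list \<Rightarrow> nat \<Rightarrow> real" where
  "halt_within M w k = measure_pmf.prob (run M w k) {c. fst c \<in> halting M}"

definition halt_before :: "'a pfa \<Rightarrow> 'a list \<Rightarrow> int \<Rightarrow> real" where
  "halt_before M w m = (if m \<le> 0 then 0 else halt_within M w (nat m - 1))"

text \<open>Expected runtime E[T] = \<Sum>_{k\<ge>0} Pr[T > k] (in [0,\<infinity>]; it is \<infinity> if the
  machine fails to halt with positive probability).\<close>
definition expected_runtime :: "'a pfa \<Rightarrow> 'a list \<Rightarrow> ennreal" where
  "expected_runtime M w = (\<Sum>k. ennreal (1 - halt_within M w k))"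

end

theory Submission
  imports Defs
begin


definition good :: "'a pfa \<Rightarrow> 'a list \<Rightarrow> nat \<times> nat \<Rightarrow> bool" where
  "good M w c \<longleftrightarrow> fst c \<in> states M \<and> snd c \<le> length w + 1"

lemma tape_0[simp]: "tape w 0 = LEnd" by (simp add: tape_def)
lemma tape_end[simp]: "tape w (Suc (length w)) = REnd" by (simp add: tape_def)
lemma tape_mid: "1 \<le> x \<Longrightarrow> x \<le> length w \<Longrightarrow> tape w x = Sym (w ! (x - 1))" by (simp add: tape_def)

lemma step_good:
  assumes v: "valid_pfa M" and g: "good M w c" and c': "c' \<in> set_pmf (step M w c)"
  shows "good M w c'"
proof (cases "fst c \<in> halting M")
  case True then show ?thesis using g c' by (simp add: step_def)
next
  case False
  then obtain b where c'e: "c' = (let r = delta M (fst c) (tape w (snd c)) b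
                        in (fst r, nat (int (snd c) + snd r)))"
    using c' by (auto simp: step_def)
  define r where "r = delta M (fst c) (tape w (snd c)) b"
  have q: "fst c \<in> states M" using g by (simp add: good_def)
  have r1: "fst r \<in> states M" "snd r \<in> {-1,0,1}" using v q by (auto simp: valid_pfa_def r_def)
  have "nat (int (snd c) + snd r) \<le> length w + 1"
  proof (cases "snd c = 0")
    case True
    then have "snd r \<noteq> -1" using v q by (auto simp: valid_pfa_def r_def)
    then show ?thesis using True r1 by auto
  next
    case F: False
    show ?thesis
    proof (cases "snd c = length w + 1")
      case True
      then have "snd r \<noteq> 1" using v q by (auto simp: valid_pfa_def r_def)
      then show ?thesis using True r1 by auto
    next
      case False
      then show ?thesis using g r1 by (auto simp: good_def)
    qed
  qed
  then show ?thesis using c'e r1 by (simp add: good_def r_def Let_def)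
qed

lemma run_good:
  assumes v: "valid_pfa M" shows "c \<in> set_pmf (run M w k) \<Longrightarrow> good M w c"
proof (induction k arbitrary: c)
  case 0 then show ?case using v by (simp add: good_def valid_pfa_def)
next
  case (Suc k)
  then obtain d where "d \<in> set_pmf (run M w k)" "c \<in> set_pmf (step M w d)" by auto
  then show ?case using Suc.IH step_good[OF v] by blast
qed

lemma halt_bound_int:
  fixes U :: "nat \<times> nat \<Rightarrow> ennreal"
  assumes v: "valid_pfa M"
    and dr: "\<And>c. good M w c \<Longrightarrow> fst c \<notin> halting M \<Longrightarrow> (\<integral>\<^sup>+y. U y \<partial>step M w c) \<le> U c + d"
  shows "(\<integral>\<^sup>+y. U y \<partial>run M w k) \<le> U (init M, 0) + of_nat k * d"
proof (induction k)
  case 0 then show ?case by simp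
next
  case (Suc k)
  have "(\<integral>\<^sup>+y. U y \<partial>run M w (Suc k)) = (\<integral>\<^sup>+c. (\<integral>\<^sup>+y. U y \<partial>step M w c) \<partial>run M w k)"
    by simp
  also have "\<dots> \<le> (\<integral>\<^sup>+c. U c + d \<partial>run M w k)"
  proof (rule nn_integral_mono_AE)
    show "AE c in measure_pmf (run M w k). (\<integral>\<^sup>+y. U y \<partial>step M w c) \<le> U c + d"
      unfolding AE_measure_pmf_iff
    proof
      fix c assume "c \<in> set_pmf (run M w k)"
      then have g: "good M w c" using run_good[OF v] by blast
      show "(\<integral>\<^sup>+y. U y \<partial>step M w c) \<le> U c + d"
      proof (cases "fst c \<in> halting M")
        case True then show ?thesis by (simp add: step_def)
      next
        case False then show ?thesis using dr g by blast
      qed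
    qed
  qed
  also have "\<dots> = (\<integral>\<^sup>+c. U c \<partial>run M w k) + d"
    by (simp add: nn_integral_add measure_pmf.emeasure_space_1)
  also have "\<dots> \<le> U (init M, 0) + of_nat k * d + d" using Suc.IH by (simp add: add_right_mono)
  also have "\<dots> = U (init M, 0) + of_nat (Suc k) * d" by (simp add: algebra_simps)
  finally show ?case .
qed

lemma halt_bound:
  fixes U :: "nat \<times> nat \<Rightarrow> ennreal"
  assumes v: "valid_pfa M"
    and dr: "\<And>c. good M w c \<Longrightarrow> fst c \<notin> halting M \<Longrightarrow> (\<integral>\<^sup>+y. U y \<partial>step M w c) \<le> U c + d"
    and h: "\<And>c. good M w c \<Longrightarrow> fst c \<in> halting M \<Longrightarrow> 1 \<le> U c"
  shows "ennreal (halt_within M w k) \<le> U (init M, 0) + of_nat k * d"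
proof -
  have "ennreal (halt_within M w k) = emeasure (run M w k) {c. fst c \<in> halting M}"
    by (simp add: halt_within_def measure_pmf.emeasure_eq_measure)
  also have "\<dots> = (\<integral>\<^sup>+c. indicator {c. fst c \<in> halting M} c \<partial>run M w k)" by simp
  also have "\<dots> \<le> (\<integral>\<^sup>+c. U c \<partial>run M w k)"
  proof (rule nn_integral_mono_AE)
    show "AE c in measure_pmf (run M w k). indicator {c. fst c \<in> halting M} c \<le> U c"
      unfolding AE_measure_pmf_iff using run_good[OF v] h by (auto simp: indicator_def)
  qed
  also have "\<dots> \<le> U (init M, 0) + of_nat k * d" by (rule halt_bound_int[OF v dr])
  finally show ?thesis .
qed

lemma runtime_bound_int:
  fixes V :: "nat \<times> nat \<Rightarrow> ennreal"
  assumes v: "valid_pfa M"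
    and dr: "\<And>c. good M w c \<Longrightarrow> fst c \<notin> halting M \<Longrightarrow> (\<integral>\<^sup>+y. V y \<partial>step M w c) + 1 \<le> V c"
  shows "(\<Sum>k<K. ennreal (1 - halt_within M w k)) + (\<integral>\<^sup>+y. V y \<partial>run M w K) \<le> V (init M, 0)"
proof (induction K)
  case 0 then show ?case by simp
next
  case (Suc k)
  have e: "ennreal (1 - halt_within M w k) = (\<integral>\<^sup>+c. indicator {c. fst c \<notin> halting M} c \<partial>run M w k)"
  proof -
    have "1 - halt_within M w k = measure_pmf.prob (run M w k) {c. fst c \<notin> halting M}"
      unfolding halt_within_def
      by (subst measure_pmf.prob_compl[symmetric]) (auto intro!: arg_cong[where f="measure_pmf.prob _"])
    then show ?thesis by (simp add: measure_pmf.emeasure_eq_measure)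
  qed
  have "ennreal (1 - halt_within M w k) + (\<integral>\<^sup>+y. V y \<partial>run M w (Suc k))
     = (\<integral>\<^sup>+c. indicator {c. fst c \<notin> halting M} c + (\<integral>\<^sup>+y. V y \<partial>step M w c) \<partial>run M w k)"
    by (simp add: e nn_integral_add)
  also have "\<dots> \<le> (\<integral>\<^sup>+c. V c \<partial>run M w k)"
  proof (rule nn_integral_mono_AE)
    show "AE c in measure_pmf (run M w k). indicator {c. fst c \<notin> halting M} c + (\<integral>\<^sup>+y. V y \<partial>step M w c) \<le> V c"
      unfolding AE_measure_pmf_iff
    proof
      fix c assume "c \<in> set_pmf (run M w k)"
      then have g: "good M w c" using run_good[OF v] by blast
      show "indicator {c. fst c \<notin> halting M} c + (\<integral>\<^sup>+y. V y \<partial>step M w c) \<le> V c"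
      proof (cases "fst c \<in> halting M")
        case True then show ?thesis by (simp add: step_def)
      next
        case False then show ?thesis using dr[OF g False] by (simp add: add.commute)
      qed
    qed
  qed
  finally have "ennreal (1 - halt_within M w k) + (\<integral>\<^sup>+y. V y \<partial>run M w (Suc k)) \<le> (\<integral>\<^sup>+c. V c \<partial>run M w k)" .
  then have "(\<Sum>k<Suc k. ennreal (1 - halt_within M w k)) + (\<integral>\<^sup>+y. V y \<partial>run M w (Suc k))
     \<le> (\<Sum>k<k. ennreal (1 - halt_within M w k)) + (\<integral>\<^sup>+c. V c \<partial>run M w k)"
    by (simp add: add.assoc add_left_mono)
  then show ?case using Suc.IH by order
qed

lemma runtime_bound:
  fixes V :: "nat \<times> nat \<Rightarrow> ennreal"
  assumes v: "valid_pfa M"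
    and dr: "\<And>c. good M w c \<Longrightarrow> fst c \<notin> halting M \<Longrightarrow> (\<integral>\<^sup>+y. V y \<partial>step M w c) + 1 \<le> V c"
  shows "expected_runtime M w \<le> V (init M, 0)"
  unfolding expected_runtime_def
proof (rule suminf_le_const)
  show "summable (\<lambda>k. ennreal (1 - halt_within M w k))" by simp
  fix K
  show "(\<Sum>k<K. ennreal (1 - halt_within M w k)) \<le> V (init M, 0)"
  proof -
    have "(\<Sum>k<K. ennreal (1 - halt_within M w k)) \<le> (\<Sum>k<K. ennreal (1 - halt_within M w k)) + (\<integral>\<^sup>+y. V y \<partial>run M w K)"
      by simp
    also have "\<dots> \<le> V (init M, 0)" by (rule runtime_bound_int[OF v dr])
    finally show ?thesis .
  qed
qed

lemma coin_int:
  "(\<integral>\<^sup>+y. U y \<partial>map_pmf g (bernoulli_pmf (1/2))) = U (g True) / 2 + U (g False) / 2"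
  by (subst nn_integral_map_pmf, subst nn_integral_measure_pmf_support[of UNIV])
     (auto simp: UNIV_bool ennreal_divide_times divide_ennreal_def mult.commute)




definition mdelta :: "nat \<Rightarrow> nat \<Rightarrow> nat \<Rightarrow> 'a tsym \<Rightarrow> bool \<Rightarrow> nat \<times> int" where
  "mdelta T D q s b =
    (if q = 1 then (if s = REnd then (2+T, -1) else (1, 1))
     else if 2 \<le> q \<and> q < 2+T then
       (if s = LEnd then (1, 1) else if s = REnd then (if q+1 = 2+T then (0, 0) else (q+T+1, -1))
        else (q, if b then 1 else -1))
     else if 2+T \<le> q \<and> q < 2+2*T then (if s = LEnd then (q-T, 1) else (q, -1))
     else if 2+2*T \<le> q \<and> q \<le> 2+2*T+D then (if q = 2+2*T then (2+T, 0) else (q-1, 0))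
     else (0, 0))"

definition mach :: "nat \<Rightarrow> nat \<Rightarrow> 'a pfa" where
  "mach T D = \<lparr>states = {0..2+2*T+D}, init = 2+2*T+D, halting = {0}, delta = mdelta T D\<rparr>"

lemma mach_simps[simp]: "states (mach T D) = {0..2+2*T+D}" "init (mach T D) = 2+2*T+D"
  "halting (mach T D) = {0}" "delta (mach T D) = mdelta T D"
  by (simp_all add: mach_def)

lemma valid_mach: "valid_pfa (mach T D)"
  unfolding valid_pfa_def by (auto simp: mdelta_def)

definition gf :: "nat \<Rightarrow> nat \<Rightarrow> 'a list \<Rightarrow> nat \<times> nat \<Rightarrow> bool \<Rightarrow> nat \<times> nat" where
  "gf T D w c b = (let r = mdelta T D (fst c) (tape w (snd c)) b in (fst r, nat (int (snd c) + snd r)))"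

lemma step_mach: "fst c \<noteq> 0 \<Longrightarrow> step (mach T D) w c = map_pmf (gf T D w c) (bernoulli_pmf (1/2))"
  unfolding step_def gf_def by simp

lemma gf_good: "good (mach T D) w c \<Longrightarrow> fst c \<noteq> 0 \<Longrightarrow> good (mach T D) w (gf T D w c b)"
proof -
  assume a: "good (mach T D) w c" "fst c \<noteq> 0"
  have "gf T D w c b \<in> set_pmf (step (mach T D) w c)" using a by (simp add: step_mach)
  then show ?thesis using step_good[OF valid_mach a(1)] by blast
qed

definition uf :: "nat \<Rightarrow> nat \<Rightarrow> nat \<times> nat \<Rightarrow> real" where
  "uf T n c = (let q = fst c; x = real (snd c); N = real n + 1 in
     if q = 0 then (2*N+1)*N^T
     else if q = 1 then x
     else if q < 2+T then x*(2*N+1)*N^(q-2)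
     else if q < 2+2*T then (if q = 2+T then N else (2*N+1)*N^(q-2-T)) + N - x
     else 2*N)"

lemma good_mach: "good (mach T D) w (q,x) \<longleftrightarrow> q \<le> 2+2*T+D \<and> x \<le> length w + 1"
  by (simp add: good_def)

lemma tape_cases:
  assumes "x \<le> length w + 1"
  shows "(x = 0 \<and> tape w x = LEnd) \<or> (x = length w + 1 \<and> tape w x = REnd)
   \<or> (1 \<le> x \<and> x \<le> length w \<and> tape w x = Sym (w ! (x - 1)))"
  using assms by (auto simp: tape_def)

lemma pow_nonneg_aux: "0 \<le> (3 + 2 * real n) * (real n + 1) ^ k"
  by simp

lemma uf_nonneg: "good (mach T D) w c \<Longrightarrow> 0 \<le> uf T (length w) c"
  using pow_nonneg_aux[of "length w"]
  by (cases c) (auto simp: uf_def Let_def good_mach intro: add_increasing)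


context fixes T D :: nat and w :: "'a list" and n :: nat
  assumes T: "T \<ge> 1" and n: "n = length w"
begin

lemma gf_R: "x \<le> n \<Longrightarrow> gf T D w (1,x) b = (1, x+1)"
  using n by (auto simp: gf_def mdelta_def tape_def)
lemma gf_R_end: "gf T D w (1, n+1) b = (2+T, n)"
  using n by (simp add: gf_def mdelta_def)
lemma gf_W_L: "j < T \<Longrightarrow> gf T D w (2+j, 0) b = (1,1)"
  by (simp add: gf_def mdelta_def)
lemma gf_W_last: "j + 1 = T \<Longrightarrow> gf T D w (2+j, n+1) b = (0, n+1)"
  using n by (simp add: gf_def mdelta_def)
lemma gf_W_R: "j + 1 < T \<Longrightarrow> gf T D w (2+j, n+1) b = (2+T+(j+1), n)"
  using n by (simp add: gf_def mdelta_def)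
lemma gf_W_mid: "j < T \<Longrightarrow> 1 \<le> x \<Longrightarrow> x \<le> n \<Longrightarrow>
   gf T D w (2+j, x) True = (2+j, x+1) \<and> gf T D w (2+j, x) False = (2+j, x-1)"
  using n by (auto simp: gf_def mdelta_def tape_def)
lemma gf_B_L: "j < T \<Longrightarrow> gf T D w (2+T+j, 0) b = (2+j, 1)"
  by (simp add: gf_def mdelta_def)
lemma gf_B: "j < T \<Longrightarrow> 1 \<le> x \<Longrightarrow> x \<le> n + 1 \<Longrightarrow> gf T D w (2+T+j, x) b = (2+T+j, x-1)"
  using n by (auto simp: gf_def mdelta_def tape_def)
lemma gf_P0: "gf T D w (2+2*T, x) b = (2+T, x)"
  by (simp add: gf_def mdelta_def)
lemma gf_P: "2+2*T < q \<Longrightarrow> q \<le> 2+2*T+D \<Longrightarrow> gf T D w (q, x) b = (q-1, x)"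
  by (simp add: gf_def mdelta_def)

end




context fixes T D :: nat and w :: "'a list" and n :: nat
  assumes T: "T \<ge> 1" and n: "n = length w"
begin

abbreviation "NN \<equiv> real n + 1"

lemma uf_R: "uf T n (1,x) = real x" by (simp add: uf_def)
lemma uf_W: "j < T \<Longrightarrow> uf T n (2+j,x) = real x * (2*NN+1) * NN^j" by (simp add: uf_def)
lemma uf_B0: "uf T n (2+T,x) = NN + NN - real x" using T by (simp add: uf_def)
lemma uf_B: "j < T \<Longrightarrow> 0 < j \<Longrightarrow> uf T n (2+T+j,x) = (2*NN+1)*NN^j + NN - real x" by (simp add: uf_def Let_def)
lemma uf_Bx: "j < T \<Longrightarrow> uf T n (2+T+j,x) = ((if j = 0 then NN else (2*NN+1)*NN^j) + NN) - real x"
  by (simp add: uf_def Let_def)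
lemma uf_P: "2+2*T \<le> q \<Longrightarrow> uf T n (q,x) = 2*NN" using T by (simp add: uf_def)
lemma uf_H: "uf T n (0,x) = (2*NN+1)*NN^T" by (simp add: uf_def)

lemma uf_drift:
  assumes g: "good (mach T D) w c" and q0: "fst c \<noteq> 0"
  shows "uf T n (gf T D w c True) + uf T n (gf T D w c False) \<le> 2 * uf T n c + 2"
proof -
  obtain q x where c: "c = (q,x)" by force
  have x: "x \<le> n + 1" and q: "q \<le> 2+2*T+D" using g n by (auto simp: c good_mach)
  have q0': "q \<noteq> 0" using q0 c by simp
  consider "q = 1" | j where "q = 2 + j" "j < T" | j where "q = 2 + T + j" "j < T" | "q \<ge> 2 + 2*T"
  proof -
    have "q = 1 \<or> (2 \<le> q \<and> q < 2+T) \<or> (2+T \<le> q \<and> q < 2+2*T) \<or> q \<ge> 2+2*T" using q0' by linarith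
    then show thesis
    proof (elim disjE conjE)
      assume "q = 1" then show thesis by (rule that(1))
    next
      assume "2 \<le> q" "q < 2+T" then show thesis using that(2)[of "q-2"] by simp
    next
      assume "2+T \<le> q" "q < 2+2*T" then show thesis using that(3)[of "q-2-T"] by simp
    next
      assume "q \<ge> 2+2*T" then show thesis by (rule that(4))
    qed
  qed
  then show ?thesis
  proof cases
    case 1
    show ?thesis
    proof (cases "x = n + 1")
      case True
      then show ?thesis using 1 gf_R_end[OF T n] uf_R uf_B0 by (simp add: c)
    next
      case False
      then show ?thesis using 1 x gf_R[OF T n, of x] uf_R by (simp add: c)
    qed
  next
    case (2 j)
    consider "x = 0" | "x = n + 1" | "1 \<le> x" "x \<le> n" using x by linarith
    then show ?thesis
    proof cases
      case 1
      then show ?thesis using 2 gf_W_L[OF T n] uf_R uf_W by (simp add: c)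
    next
      case xe: 2
      show ?thesis
      proof (cases "j + 1 = T")
        case True
        have p: "NN ^ T = NN * NN ^ j" using True by auto
        have a: "gf T D w c b = (0, n+1)" for b using 2 xe True gf_W_last[OF T n] by (simp add: c)
        have u: "uf T n c = real (n+1) * (2*NN+1) * NN^j" using 2 xe uf_W[of j "n+1"] by (simp add: c)
        show ?thesis unfolding a u uf_H p by (simp add: algebra_simps)
      next
        case False
        then have "j + 1 < T" using 2 by simp
        then have a: "gf T D w c b = (2+T+(j+1), n)" for b using 2 xe gf_W_R[OF T n] by (simp add: c)
        have u: "uf T n c = real (n+1) * (2*NN+1) * NN^j" using 2 xe uf_W[of j "n+1"] by (simp add: c)
        have u2: "uf T n (2+T+(j+1), n) = (2*NN+1)*NN^(j+1) + NN - real n" using uf_B[of "j+1" n] `j+1<T` by simp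
        show ?thesis unfolding a u u2 by (simp add: algebra_simps)
      qed
    next
      case 3
      then have "real (x - 1) = real x - 1" by simp
      then show ?thesis using 2 3 gf_W_mid[OF T n, of j x] uf_W
        by (simp add: c algebra_simps)
    qed
  next
    case (3 j)
    show ?thesis
    proof (cases "x = 0")
      case True
      have a: "gf T D w c b = (2+j, 1)" for b using 3 `x = 0` gf_B_L[OF T n] by (simp add: c)
      have u2: "uf T n (2+j, 1) = (2*NN+1)*NN^j" using uf_W[of j 1] 3 by simp
      show ?thesis
      proof (cases "j = 0")
        case True
        have u: "uf T n c = NN + NN" using uf_B0[of 0] 3 True `x = 0` by (simp add: c)
        show ?thesis unfolding a u u2 using True by (simp add: algebra_simps)
      next
        case False
        have u: "uf T n c = (2*NN+1)*NN^j + NN" using uf_B[of j 0] 3 False `x = 0` by (simp add: c)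
        show ?thesis unfolding a u u2 by (simp add: algebra_simps)
      qed
    next
      case False
      then have r: "real (x - 1) = real x - 1" by simp
      have a: "gf T D w c b = (2+T+j, x-1)" for b using 3 x False gf_B[OF T n, of j x] by (simp add: c)
      have u: "uf T n c = ((if j = 0 then NN else (2*NN+1)*NN^j) + NN) - real x"
        unfolding c 3 by (rule uf_Bx[OF 3(2)])
      have u2: "uf T n (2+T+j, x-1) = ((if j = 0 then NN else (2*NN+1)*NN^j) + NN) - real (x-1)"
        by (rule uf_Bx[OF 3(2)])
      show ?thesis unfolding a u u2 r by simp
    qed
  next
    case 4
    show ?thesis
    proof (cases "q = 2 + 2*T")
      case True
      then show ?thesis using gf_P0[OF T n] uf_P uf_B0 by (simp add: c)
    next
      case False
      then show ?thesis using 4 q gf_P[OF T n, of q] uf_P by (simp add: c)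
    qed
  qed
qed

end


fun bs :: "real \<Rightarrow> nat \<Rightarrow> real" where
  "bs N 0 = 3*N" | "bs N (Suc j) = N * bs N j + 2*N"

lemma bs_nonneg: "0 \<le> N \<Longrightarrow> 0 \<le> bs N j"
  by (induction j) auto

lemma bs_mono: "1 \<le> N \<Longrightarrow> j \<le> k \<Longrightarrow> bs N j \<le> bs N k"
proof (induction k)
  case 0 then show ?case by simp
next
  case (Suc k)
  have "bs N k \<le> N * bs N k" using bs_nonneg[of N k] Suc.prems by (simp add: mult_le_cancel_right1)
  then have "bs N k \<le> bs N (Suc k)" using Suc.prems by simp
  then show ?case using Suc by (cases "j = Suc k") auto
qed

lemma bs_bound: "1 \<le> N \<Longrightarrow> bs N j \<le> (3 + 2*real j) * N^(j+1)"
proof (induction j)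
  case 0 then show ?case by simp
next
  case (Suc j)
  have "N \<le> N^(j+2)" using power_increasing[of 1 "j+2" N] Suc.prems by simp
  have "bs N (Suc j) = N * bs N j + 2*N" by simp
  also have "\<dots> \<le> N * ((3 + 2*real j) * N^(j+1)) + 2 * N^(j+2)"
    using Suc `N \<le> N^(j+2)` by (intro add_mono mult_left_mono) auto
  also have "\<dots> = (3 + 2*real (Suc j)) * N^(Suc j+1)" by (simp add: algebra_simps)
  finally show ?case .
qed

definition vf :: "nat \<Rightarrow> nat \<Rightarrow> nat \<Rightarrow> nat \<times> nat \<Rightarrow> real" where
  "vf T D n c = (let q = fst c; x = real (snd c); N = real n + 1; r = bs N (T-1) * N + N + 1 in
     if q = 0 then 0
     else if q = 1 then r - x
     else if q < 2+T then r - bs N (q-2) * x + x * (N - x)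
     else if q < 2+2*T then (if q = 2+T then r - 2*N else r - bs N (q-3-T) * N - N) + x
     else r - 2*N + real (q - (2+2*T)) + 1 + x)"

context fixes T D :: nat and w :: "'a list" and n :: nat
  assumes T: "T \<ge> 1" and n: "n = length w"
begin


lemma vf_H: "vf T D n (0,x) = 0" by (simp add: vf_def)
lemma vf_R: "vf T D n (1,x) = (bs (real n + 1) (T-1) * (real n + 1) + (real n + 1) + 1) - real x" by (simp add: vf_def Let_def)
lemma vf_W: "j < T \<Longrightarrow> vf T D n (2+j,x) = (bs (real n + 1) (T-1) * (real n + 1) + (real n + 1) + 1) - bs (real n + 1) j * real x + real x * ((real n + 1) - real x)"
  by (simp add: vf_def Let_def)
lemma vf_Bx: "j < T \<Longrightarrow> vf T D n (2+T+j,x) =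
   (if j = 0 then (bs (real n + 1) (T-1) * (real n + 1) + (real n + 1) + 1) - 2*(real n + 1) else (bs (real n + 1) (T-1) * (real n + 1) + (real n + 1) + 1) - bs (real n + 1) (j-1) * (real n + 1) - (real n + 1)) + real x"
  using T by (cases j) (simp_all add: vf_def Let_def)
lemma vf_P: "2+2*T \<le> q \<Longrightarrow> vf T D n (q,x) = (bs (real n + 1) (T-1) * (real n + 1) + (real n + 1) + 1) - 2*(real n + 1) + real (q - (2+2*T)) + 1 + real x"
  using T by (simp add: vf_def Let_def)

lemma RR_ge: "j \<le> T - 1 \<Longrightarrow> bs (real n + 1) j * (real n + 1) + (real n + 1) + 1 \<le> (bs (real n + 1) (T-1) * (real n + 1) + (real n + 1) + 1)"
proof -
  assume "j \<le> T - 1"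
  then have "bs (real n + 1) j \<le> bs (real n + 1) (T-1)" by (intro bs_mono) auto
  then have "bs (real n + 1) j * (real n + 1) \<le> bs (real n + 1) (T-1) * (real n + 1)" by (rule mult_right_mono) simp
  then show ?thesis by linarith
qed

lemma vf_nonneg:
  assumes g: "good (mach T D) w c"
  shows "0 \<le> vf T D n c"
proof -
  obtain q x where c: "c = (q,x)" by force
  have x: "x \<le> n + 1" and q: "q \<le> 2+2*T+D" using g n by (auto simp: c good_mach)
  have xr: "real x \<le> (real n + 1)" using x by simp
  have b0: "0 \<le> bs (real n + 1) j" for j by (rule bs_nonneg) simp
  have r1: "(real n + 1) + 1 \<le> (bs (real n + 1) (T-1) * (real n + 1) + (real n + 1) + 1)" using b0[of "T-1"] by simp
  have "bs (real n + 1) 0 \<le> bs (real n + 1) (T-1)" by (intro bs_mono) auto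
  then have "1 \<le> bs (real n + 1) (T-1)" by simp
  then have "1 * (real n + 1) \<le> bs (real n + 1) (T-1) * (real n + 1)" by (intro mult_right_mono) auto
  then have r2': "(real n + 1) \<le> bs (real n + 1) (T-1) * (real n + 1)" by simp
  have r2: "2*(real n + 1) \<le> (bs (real n + 1) (T-1) * (real n + 1) + (real n + 1) + 1)" using r2' by (smt (verit))
  consider "q = 0" | "q = 1" | j where "q = 2 + j" "j < T" | j where "q = 2 + T + j" "j < T" | "q \<ge> 2 + 2*T"
  proof -
    have "q = 0 \<or> q = 1 \<or> (2 \<le> q \<and> q < 2+T) \<or> (2+T \<le> q \<and> q < 2+2*T) \<or> q \<ge> 2+2*T" by linarith
    then show thesis
    proof (elim disjE conjE)
      assume "q = 0" then show thesis by (rule that(1))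
    next
      assume "q = 1" then show thesis by (rule that(2))
    next
      assume "2 \<le> q" "q < 2+T" then show thesis using that(3)[of "q-2"] by simp
    next
      assume "2+T \<le> q" "q < 2+2*T" then show thesis using that(4)[of "q-2-T"] by simp
    next
      assume "q \<ge> 2+2*T" then show thesis by (rule that(5))
    qed
  qed
  then show ?thesis
  proof cases
    case 1 then show ?thesis by (simp add: c vf_H)
  next
    case 2
    have "vf T D n c = (bs (real n + 1) (T-1) * (real n + 1) + (real n + 1) + 1) - real x"
      unfolding c 2 by (rule vf_R)
    then show ?thesis using r1 xr by linarith
  next
    case (3 j)
    have v: "vf T D n c = (bs (real n + 1) (T-1) * (real n + 1) + (real n + 1) + 1) - bs (real n + 1) j * real x + real x * ((real n + 1) - real x)"
      unfolding c 3 by (rule vf_W[OF 3(2)])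
    have "bs (real n + 1) j * real x \<le> bs (real n + 1) j * (real n + 1)" using xr b0[of j] by (simp add: mult_left_mono)
    moreover have "0 \<le> real x * ((real n + 1) - real x)" using xr by simp
    moreover have "bs (real n + 1) j * (real n + 1) + (real n + 1) + 1 \<le> (bs (real n + 1) (T-1) * (real n + 1) + (real n + 1) + 1)" using RR_ge[of j] 3 by simp
    ultimately show ?thesis unfolding v by linarith
  next
    case (4 j)
    have v: "vf T D n c = (if j = 0 then (bs (real n + 1) (T-1) * (real n + 1) + (real n + 1) + 1) - 2*(real n + 1) else (bs (real n + 1) (T-1) * (real n + 1) + (real n + 1) + 1) - bs (real n + 1) (j-1) * (real n + 1) - (real n + 1)) + real x"
      unfolding c 4 by (rule vf_Bx[OF 4(2)])
    show ?thesis
    proof (cases "j = 0")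
      case True then show ?thesis using r2 unfolding v by simp
    next
      case False
      have "bs (real n + 1) (j-1) * (real n + 1) + (real n + 1) + 1 \<le> (bs (real n + 1) (T-1) * (real n + 1) + (real n + 1) + 1)" using RR_ge[of "j-1"] 4 by simp
      then show ?thesis using False unfolding v by simp
    qed
  next
    case 5
    have v: "vf T D n c = (bs (real n + 1) (T-1) * (real n + 1) + (real n + 1) + 1) - 2*(real n + 1) + real (q - (2+2*T)) + 1 + real x"
      unfolding c by (rule vf_P[OF 5])
    show ?thesis using r2 unfolding v by simp
  qed
qed


lemma vf_drift:
  assumes g: "good (mach T D) w c" and q0: "fst c \<noteq> 0"
  shows "vf T D n (gf T D w c True) + vf T D n (gf T D w c False) + 2 \<le> 2 * vf T D n c"
proof -
  obtain q x where c: "c = (q,x)" by force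
  have x: "x \<le> n + 1" and q: "q \<le> 2+2*T+D" using g n by (auto simp: c good_mach)
  have q0': "q \<noteq> 0" using q0 c by simp
  consider "q = 1" | j where "q = 2 + j" "j < T" | j where "q = 2 + T + j" "j < T" | "q \<ge> 2 + 2*T"
  proof -
    have "q = 1 \<or> (2 \<le> q \<and> q < 2+T) \<or> (2+T \<le> q \<and> q < 2+2*T) \<or> q \<ge> 2+2*T" using q0' by linarith
    then show thesis
    proof (elim disjE conjE)
      assume "q = 1" then show thesis by (rule that(1))
    next
      assume "2 \<le> q" "q < 2+T" then show thesis using that(2)[of "q-2"] by simp
    next
      assume "2+T \<le> q" "q < 2+2*T" then show thesis using that(3)[of "q-2-T"] by simp
    next
      assume "q \<ge> 2+2*T" then show thesis by (rule that(4))
    qed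
  qed
  then show ?thesis
  proof cases
    case 1
    have v: "vf T D n c = (bs (real n + 1) (T-1) * (real n + 1) + (real n + 1) + 1) - real x" unfolding c 1 by (rule vf_R)
    show ?thesis
    proof (cases "x = n + 1")
      case True
      have a: "gf T D w c b = (2+T, n)" for b using 1 True gf_R_end[OF T n] by (simp add: c)
      have v2: "vf T D n (2+T, n) = (if (0::nat) = 0 then (bs (real n + 1) (T-1) * (real n + 1) + (real n + 1) + 1) - 2*(real n + 1) else (bs (real n + 1) (T-1) * (real n + 1) + (real n + 1) + 1) - bs (real n + 1) (0-1) * (real n + 1) - (real n + 1)) + real n"
        using vf_Bx[of 0 n] T by simp
      show ?thesis unfolding a v v2 using True by simp
    next
      case False
      have a: "gf T D w c b = (1, x+1)" for b using 1 x False gf_R[OF T n, of x] by (simp add: c)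
      have v2: "vf T D n (1, x+1) = (bs (real n + 1) (T-1) * (real n + 1) + (real n + 1) + 1) - real (x+1)" by (rule vf_R)
      show ?thesis unfolding a v v2 by simp
    qed
  next
    case (2 j)
    have v: "vf T D n c = (bs (real n + 1) (T-1) * (real n + 1) + (real n + 1) + 1) - bs (real n + 1) j * real x + real x * ((real n + 1) - real x)"
      unfolding c 2 by (rule vf_W[OF 2(2)])
    consider "x = 0" | "x = n + 1" | "1 \<le> x" "x \<le> n" using x by linarith
    then show ?thesis
    proof cases
      case 1
      have a: "gf T D w c b = (1, 1)" for b using 1 2 gf_W_L[OF T n] by (simp add: c)
      have v2: "vf T D n (1, 1) = (bs (real n + 1) (T-1) * (real n + 1) + (real n + 1) + 1) - real (1::nat)" by (rule vf_R)
      show ?thesis unfolding a v v2 using 1 by simp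
    next
      case xe: 2
      show ?thesis
      proof (cases "j + 1 = T")
        case True
        have a: "gf T D w c b = (0, n+1)" for b using 2 xe True gf_W_last[OF T n] by (simp add: c)
        have jT: "T - 1 = j" using True by simp
        show ?thesis unfolding a v vf_H jT using xe by (simp add: algebra_simps)
      next
        case False
        then have jl: "j + 1 < T" using 2 by simp
        then have a: "gf T D w c b = (2+T+(j+1), n)" for b using 2 xe gf_W_R[OF T n] by (simp add: c)
        have v2: "vf T D n (2+T+(j+1), n) = (if j+1 = 0 then (bs (real n + 1) (T-1) * (real n + 1) + (real n + 1) + 1) - 2*(real n + 1) else (bs (real n + 1) (T-1) * (real n + 1) + (real n + 1) + 1) - bs (real n + 1) (j+1-1) * (real n + 1) - (real n + 1)) + real n"
          by (rule vf_Bx) (use jl in simp)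
        show ?thesis unfolding a v v2 using xe by (simp add: algebra_simps)
      qed
    next
      case 3
      have r: "real (x - 1) = real x - 1" using 3 by simp
      have a1: "gf T D w c True = (2+j, x+1)" and a2: "gf T D w c False = (2+j, x-1)"
        using 2 3 gf_W_mid[OF T n, of j x] by (simp_all add: c)
      have v1: "vf T D n (2+j, x+1) = (bs (real n + 1) (T-1) * (real n + 1) + (real n + 1) + 1) - bs (real n + 1) j * real (x+1) + real (x+1) * ((real n + 1) - real (x+1))"
        by (rule vf_W[OF 2(2)])
      have v2: "vf T D n (2+j, x-1) = (bs (real n + 1) (T-1) * (real n + 1) + (real n + 1) + 1) - bs (real n + 1) j * real (x-1) + real (x-1) * ((real n + 1) - real (x-1))"
        by (rule vf_W[OF 2(2)])
      show ?thesis unfolding a1 a2 v v1 v2 r by (simp add: algebra_simps)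
    qed
  next
    case (3 j)
    have v: "vf T D n c = (if j = 0 then (bs (real n + 1) (T-1) * (real n + 1) + (real n + 1) + 1) - 2*(real n + 1) else (bs (real n + 1) (T-1) * (real n + 1) + (real n + 1) + 1) - bs (real n + 1) (j-1) * (real n + 1) - (real n + 1)) + real x"
      unfolding c 3 by (rule vf_Bx[OF 3(2)])
    show ?thesis
    proof (cases "x = 0")
      case True
      have a: "gf T D w c b = (2+j, 1)" for b using 3 True gf_B_L[OF T n] by (simp add: c)
      have v2: "vf T D n (2+j, 1) = (bs (real n + 1) (T-1) * (real n + 1) + (real n + 1) + 1) - bs (real n + 1) j * real (1::nat) + real (1::nat) * ((real n + 1) - real (1::nat))"
        by (rule vf_W[OF 3(2)])
      show ?thesis
      proof (cases j)
        case 0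
        show ?thesis unfolding a v v2 using 0 True by (simp add: algebra_simps)
      next
        case (Suc k)
        show ?thesis unfolding a v v2 using Suc True by (simp add: algebra_simps)
      qed
    next
      case False
      have a: "gf T D w c b = (2+T+j, x-1)" for b using 3 x False gf_B[OF T n, of j x] by (simp add: c)
      have v2: "vf T D n (2+T+j, x-1) = (if j = 0 then (bs (real n + 1) (T-1) * (real n + 1) + (real n + 1) + 1) - 2*(real n + 1) else (bs (real n + 1) (T-1) * (real n + 1) + (real n + 1) + 1) - bs (real n + 1) (j-1) * (real n + 1) - (real n + 1)) + real (x-1)"
        by (rule vf_Bx[OF 3(2)])
      have r: "real (x - 1) = real x - 1" using False by simp
      show ?thesis unfolding a v v2 r by simp
    qed
  next
    case 4
    have v: "vf T D n c = (bs (real n + 1) (T-1) * (real n + 1) + (real n + 1) + 1) - 2*(real n + 1) + real (q - (2+2*T)) + 1 + real x"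
      unfolding c by (rule vf_P[OF 4])
    show ?thesis
    proof (cases "q = 2 + 2*T")
      case True
      have a: "gf T D w c b = (2+T, x)" for b using True gf_P0[OF T n] by (simp add: c)
      have v2: "vf T D n (2+T, x) = (if (0::nat) = 0 then (bs (real n + 1) (T-1) * (real n + 1) + (real n + 1) + 1) - 2*(real n + 1) else (bs (real n + 1) (T-1) * (real n + 1) + (real n + 1) + 1) - bs (real n + 1) (0-1) * (real n + 1) - (real n + 1)) + real x"
        using vf_Bx[of 0 x] T by simp
      show ?thesis unfolding a v v2 using True by simp
    next
      case False
      have a: "gf T D w c b = (q-1, x)" for b using 4 q False gf_P[OF T n, of q] by (simp add: c)
      have v2: "vf T D n (q-1, x) = (bs (real n + 1) (T-1) * (real n + 1) + (real n + 1) + 1) - 2*(real n + 1) + real (q - 1 - (2+2*T)) + 1 + real x"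
        by (rule vf_P) (use 4 False in simp)
      have r: "real (q - 1 - (2+2*T)) = real (q - (2+2*T)) - 1" using 4 False by simp
      show ?thesis unfolding a v v2 r by simp
    qed
  qed
qed

end




lemma half_ennreal: "0 \<le> a \<Longrightarrow> ennreal a / 2 = ennreal (a / 2)"
  using divide_ennreal[of a 2] by simp

lemma avg_le:
  assumes "0 \<le> a" "0 \<le> b" "0 \<le> c" "0 \<le> d" "(a+b)/2 \<le> c + d"
  shows "ennreal a / 2 + ennreal b / 2 \<le> ennreal c + ennreal d"
proof -
  have "ennreal a / 2 + ennreal b / 2 = ennreal (a/2 + b/2)"
    using assms by (simp add: half_ennreal ennreal_plus)
  also have "\<dots> \<le> ennreal (c + d)" using assms by (intro ennreal_leI) simp
  also have "\<dots> = ennreal c + ennreal d" using assms by (simp add: ennreal_plus)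
  finally show ?thesis .
qed

lemma avg_le2:
  assumes "0 \<le> a" "0 \<le> b" "(a+b)/2 + 1 \<le> c"
  shows "ennreal a / 2 + ennreal b / 2 + 1 \<le> ennreal c"
proof -
  have "ennreal a / 2 + ennreal b / 2 + 1 = ennreal (a/2 + b/2 + 1)"
    using assms by (simp add: half_ennreal ennreal_plus)
  also have "\<dots> \<le> ennreal c" by (intro ennreal_leI) (use assms in \<open>simp add: field_simps\<close>)
  finally show ?thesis .
qed

context fixes T D :: nat and w :: "'a list" and n :: nat
  assumes T: "T \<ge> 1" and n: "n = length w"
begin

lemma halt_mach:
  "halt_within (mach T D) w k \<le> (2 * (real n + 1) + real k) / ((2 * (real n + 1) + 1) * (real n + 1) ^ T)"
proof -
  define Z where "Z = (2 * (real n + 1) + 1) * (real n + 1) ^ T"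
  have Z: "0 < Z" by (simp add: Z_def)
  define U where "U c = ennreal (uf T n c / Z)" for c
  have dr: "(\<integral>\<^sup>+y. U y \<partial>step (mach T D) w c) \<le> U c + ennreal (1 / Z)"
    if g: "good (mach T D) w c" and h: "fst c \<notin> halting (mach T D)" for c
  proof -
    have q0: "fst c \<noteq> 0" using h by simp
    have n1: "0 \<le> uf T n (gf T D w c b)" for b
      using uf_nonneg[OF gf_good[OF g q0, of b]] n by simp
    have n0: "0 \<le> uf T n c" using uf_nonneg[OF g] n by simp
    have d: "uf T n (gf T D w c True) + uf T n (gf T D w c False) \<le> 2 * uf T n c + 2"
      by (rule uf_drift[OF T n g q0])
    have "(\<integral>\<^sup>+y. U y \<partial>step (mach T D) w c) = U (gf T D w c True) / 2 + U (gf T D w c False) / 2"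
      unfolding step_mach[OF q0] by (rule coin_int)
    also have "\<dots> \<le> U c + ennreal (1 / Z)" unfolding U_def
    proof (rule avg_le)
      show "(uf T n (gf T D w c True) / Z + uf T n (gf T D w c False) / Z) / 2 \<le> uf T n c / Z + 1 / Z"
      proof -
        have l: "(uf T n (gf T D w c True) + uf T n (gf T D w c False)) / 2 \<le> uf T n c + 1" using d by (simp add: field_simps)
        have "(uf T n (gf T D w c True) / Z + uf T n (gf T D w c False) / Z) / 2
             = ((uf T n (gf T D w c True) + uf T n (gf T D w c False)) / 2) / Z" by (simp add: add_divide_distrib)
        also have "\<dots> \<le> (uf T n c + 1) / Z" using l Z by (intro divide_right_mono) auto
        also have "\<dots> = uf T n c / Z + 1 / Z" by (simp add: add_divide_distrib)
        finally show ?thesis .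
      qed
    qed (use n1 n0 Z in auto)
    finally show ?thesis .
  qed
  have hh: "1 \<le> U c" if gh: "good (mach T D) w c" "fst c \<in> halting (mach T D)" for c
  proof -
    obtain x where c: "c = (0, x)" using gh by (cases c) auto
    have "uf T n c = Z" unfolding c Z_def by (rule uf_H[OF T n])
    then show ?thesis using Z by (simp add: U_def)
  qed
  have "ennreal (halt_within (mach T D) w k) \<le> U (init (mach T D :: 'a pfa), 0) + of_nat k * ennreal (1 / Z)"
    by (rule halt_bound[where U=U, OF valid_mach dr hh])
  also have "U (init (mach T D :: 'a pfa), 0) = ennreal (2 * (real n + 1) / Z)"
    unfolding U_def using uf_P[OF T n, of "2+2*T+D" 0] by simp
  also have "of_nat k * ennreal (1 / Z) = ennreal (real k / Z)"
    using Z by (simp add: ennreal_of_nat_eq_real_of_nat ennreal_mult[symmetric])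
  also have "ennreal (2 * (real n + 1) / Z) + ennreal (real k / Z) = ennreal ((2 * (real n + 1) + real k) / Z)"
  proof -
    have "(2 * (real n + 1) + real k) / Z = 2 * (real n + 1) / Z + real k / Z" by (simp add: add_divide_distrib)
    moreover have "ennreal (2 * (real n + 1) / Z + real k / Z) = ennreal (2 * (real n + 1) / Z) + ennreal (real k / Z)"
      using Z by (intro ennreal_plus) auto
    ultimately show ?thesis by simp
  qed
  finally have "ennreal (halt_within (mach T D) w k) \<le> ennreal ((2 * (real n + 1) + real k) / Z)" .
  then have "halt_within (mach T D) w k \<le> (2 * (real n + 1) + real k) / Z"
    using Z by (subst (asm) ennreal_le_iff) auto
  then show ?thesis unfolding Z_def .
qed

lemma runtime_mach:
  "expected_runtime (mach T D) w \<le> ennreal (bs (real n + 1) (T-1) * (real n + 1) + (real n + 1) + 1 - 2 * (real n + 1) + real D + 1)"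
proof -
  define V where "V c = ennreal (vf T D n c)" for c
  have dr: "(\<integral>\<^sup>+y. V y \<partial>step (mach T D) w c) + 1 \<le> V c"
    if g: "good (mach T D) w c" and h: "fst c \<notin> halting (mach T D)" for c
  proof -
    have q0: "fst c \<noteq> 0" using h by simp
    have n1: "0 \<le> vf T D n (gf T D w c b)" for b
      using vf_nonneg[OF T n gf_good[OF g q0, of b]] by simp
    have d: "vf T D n (gf T D w c True) + vf T D n (gf T D w c False) + 2 \<le> 2 * vf T D n c"
      by (rule vf_drift[OF T n g q0])
    have "(\<integral>\<^sup>+y. V y \<partial>step (mach T D) w c) = V (gf T D w c True) / 2 + V (gf T D w c False) / 2"
      unfolding step_mach[OF q0] by (rule coin_int)
    also have "\<dots> + 1 \<le> V c" unfolding V_def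
      by (rule avg_le2) (use n1 d in \<open>simp_all add: field_simps\<close>)
    finally show ?thesis by simp
  qed
  have "expected_runtime (mach T D) w \<le> V (init (mach T D :: 'a pfa), 0)"
  proof (rule runtime_bound[where V=V])
    show "valid_pfa (mach T D)" by (rule valid_mach)
  next
    fix c assume "good (mach T D) w c" "fst c \<notin> halting (mach T D)"
    then show "(\<integral>\<^sup>+y. V y \<partial>step (mach T D) w c) + 1 \<le> V c" by (rule dr)
  qed
  also have "V (init (mach T D :: 'a pfa), 0) = ennreal (bs (real n + 1) (T-1) * (real n + 1) + (real n + 1) + 1 - 2 * (real n + 1) + real D + 1)"
    unfolding V_def using vf_P[where D=D and q="2+2*T+D" and x=0, OF T n] by simp
  finally show ?thesis .
qed

lemma run_prefix: "k \<le> D \<Longrightarrow> run (mach T D) w k = return_pmf (2+2*T+D-k, 0)"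
proof (induction k)
  case 0 then show ?case by simp
next
  case (Suc k)
  define q where "q = 2+2*T+D-k"
  have q: "2+2*T < q" "q \<le> 2+2*T+D" "q \<noteq> 0" using Suc.prems by (auto simp: q_def)
  have e: "gf T D w (q,0) = (\<lambda>_. (q-1, 0))" using gf_P[OF T n q(1,2)] by (intro ext) simp
  have "run (mach T D) w (Suc k) = step (mach T D) w (q, 0)"
    using Suc by (simp add: q_def bind_return_pmf)
  also have "\<dots> = return_pmf (q-1, 0)" using q by (simp add: step_mach e)
  finally show ?case by (simp add: q_def)
qed

lemma halt_prefix: "k \<le> D \<Longrightarrow> halt_within (mach T D) w k = 0"
  using run_prefix[of k] by (simp add: halt_within_def)

end




lemma final_bound:
  fixes K eps :: real and n T m :: nat
  assumes T: "T \<ge> 1" and K: "K > 0" and e: "eps > 0"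
    and nb: "(1 + K) / eps \<le> real n" and m: "real m \<le> K * real n ^ T"
  shows "(2 * (real n + 1) + real m) / ((2 * (real n + 1) + 1) * (real n + 1) ^ T) \<le> eps"
proof -
  define N where "N = real n + 1"
  have N1: "1 \<le> N" by (simp add: N_def)
  have a: "N \<le> N ^ T" using power_increasing[of 1 T N] T N1 by simp
  have b: "real n ^ T \<le> N ^ T" by (rule power_mono) (auto simp: N_def)
  have c: "1 + K \<le> eps * N"
  proof -
    have "1 + K \<le> eps * real n" using nb e by (simp add: pos_divide_le_eq mult.commute)
    also have "\<dots> \<le> eps * N" using e by (simp add: N_def)
    finally show ?thesis .
  qed
  have "2 * N + real m \<le> 2 * N ^ T + K * N ^ T"
  proof -
    have "K * real n ^ T \<le> K * N ^ T" using b K by (intro mult_left_mono) auto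
    then show ?thesis using a m by linarith
  qed
  also have "\<dots> \<le> 2 * ((1 + K) * N ^ T)"
  proof -
    have "0 \<le> K * N ^ T" using K N1 by simp
    then show ?thesis by (simp add: algebra_simps)
  qed
  also have "\<dots> \<le> 2 * ((eps * N) * N ^ T)" using c N1 by (intro mult_left_mono mult_right_mono) auto
  also have "\<dots> \<le> eps * ((2 * N + 1) * N ^ T)"
  proof -
    have "0 \<le> eps * N ^ T" using e N1 by simp
    then show ?thesis by (simp add: algebra_simps)
  qed
  finally have "2 * N + real m \<le> eps * ((2 * N + 1) * N ^ T)" .
  moreover have "0 < (2 * N + 1) * N ^ T" using N1 by simp
  ultimately show ?thesis unfolding N_def[symmetric] by (simp add: pos_divide_le_eq mult.commute)
qed

lemma runtime_poly:
  fixes n T D :: nat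
  assumes T: "T \<ge> 1" and n: "n \<ge> 1"
  shows "bs (real n + 1) (T-1) * (real n + 1) + (real n + 1) + 1 - 2 * (real n + 1) + real D + 1
     \<le> ((2 * real T + 1) * 2 ^ (T+1) + real D + 2) * real n ^ (T + 1)"
proof -
  define N where "N = real n + 1"
  have N1: "1 \<le> N" by (simp add: N_def)
  have bsb: "bs N (T-1) \<le> (2 * real T + 1) * N ^ T"
    using bs_bound[OF N1, of "T-1"] T by (simp add: of_nat_diff algebra_simps)
  have "bs N (T-1) * N \<le> (2 * real T + 1) * N ^ T * N" using bsb N1 by (simp add: mult_right_mono)
  also have "\<dots> = (2 * real T + 1) * N ^ (T+1)" by (simp add: algebra_simps)
  also have "N ^ (T+1) \<le> (2 * real n) ^ (T+1)" by (rule power_mono) (use n in \<open>auto simp: N_def\<close>)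
  then have "(2 * real T + 1) * N ^ (T+1) \<le> (2 * real T + 1) * ((2 * real n) ^ (T+1))"
    by (intro mult_left_mono) auto
  finally have x: "bs N (T-1) * N \<le> (2 * real T + 1) * 2 ^ (T+1) * real n ^ (T+1)"
    by (simp add: power_mult_distrib mult_ac)
  have "1 \<le> real n ^ (T+1)" using n by (intro one_le_power) auto
  then have y: "real D + 2 \<le> (real D + 2) * real n ^ (T+1)"
    using mult_left_mono[of 1 "real n ^ (T+1)" "real D + 2"] by simp
  have z: "((2 * real T + 1) * 2 ^ (T+1) + real D + 2) * real n ^ (T + 1)
     = (2 * real T + 1) * 2 ^ (T+1) * real n ^ (T+1) + (real D + 2) * real n ^ (T+1)"
    by (simp add: algebra_simps)
  show ?thesis unfolding N_def[symmetric] z using x y N1 by linarith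
qed


theorem lemma1:
  fixes t :: int and f :: "nat \<Rightarrow> int" and eps :: real
  assumes "t > 0"
    and "(\<lambda>n. real_of_int (f n)) \<in> O(\<lambda>n. real n ^ nat t)"
    and "eps > 0"
  shows "\<exists>M :: ('a::finite) pfa. valid_pfa M \<and>
           (\<exists>c N. \<forall>w :: 'a list. length w \<ge> N \<longrightarrow>
                expected_runtime M w \<le> ennreal (c * real (length w) ^ (nat t + 1))) \<and>
           (\<forall>w :: 'a list. halt_before M w (f (length w)) \<le> eps)"
proof -
  define T where "T = nat t"
  have T: "T \<ge> 1" using assms(1) by (simp add: T_def)
  obtain K where K: "K > 0" and ev: "eventually (\<lambda>n. norm (real_of_int (f n)) \<le> K * norm (real n ^ T)) at_top"
    using assms(2) unfolding bigo_def T_def by blast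
  obtain N0 where N0: "\<And>n. n \<ge> N0 \<Longrightarrow> \<bar>real_of_int (f n)\<bar> \<le> K * real n ^ T"
    using ev unfolding eventually_at_top_linorder by auto
  define Nb where "Nb = max N0 (nat \<lceil>(1 + K) / eps\<rceil>)"
  define D where "D = (\<Sum>n<Nb. nat (f n))"
  define M where "M = (mach T D :: 'a pfa)"
  have rt: "\<forall>w :: 'a list. length w \<ge> 1 \<longrightarrow>
      expected_runtime M w \<le> ennreal (((2 * real T + 1) * 2 ^ (T+1) + real D + 2) * real (length w) ^ (nat t + 1))"
  proof (intro allI impI)
    fix w :: "'a list" assume n: "length w \<ge> 1"
    have "expected_runtime M w \<le> ennreal (bs (real (length w) + 1) (T-1) * (real (length w) + 1) + (real (length w) + 1) + 1 - 2 * (real (length w) + 1) + real D + 1)"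
      unfolding M_def by (rule runtime_mach[OF T refl])
    also have "\<dots> \<le> ennreal (((2 * real T + 1) * 2 ^ (T+1) + real D + 2) * real (length w) ^ (T + 1))"
      by (intro ennreal_leI runtime_poly[OF T n])
    finally show "expected_runtime M w \<le> ennreal (((2 * real T + 1) * 2 ^ (T+1) + real D + 2) * real (length w) ^ (nat t + 1))"
      by (simp add: T_def)
  qed
  have hb: "halt_before M w (f (length w)) \<le> eps" for w :: "'a list"
  proof (cases "f (length w) \<le> 0")
    case True then show ?thesis using assms(3) by (simp add: halt_before_def)
  next
    case False
    define n where "n = length w"
    define m where "m = nat (f n) - 1"
    have hbm: "halt_before M w (f (length w)) = halt_within M w m"
      using False by (simp add: halt_before_def m_def n_def)
    show ?thesis
    proof (cases "n < Nb")
      case True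
      have "nat (f n) \<le> D" unfolding D_def
        using True by (intro member_le_sum) auto
      then have "m \<le> D" by (simp add: m_def)
      then have "halt_within M w m = 0" unfolding M_def by (rule halt_prefix[OF T refl])
      then show ?thesis unfolding hbm using assms(3) by simp
    next
      case False
      then have "max N0 (nat \<lceil>(1 + K) / eps\<rceil>) \<le> n" unfolding Nb_def by (simp only: not_less)
      then have nN0: "n \<ge> N0" and nc: "n \<ge> nat \<lceil>(1 + K) / eps\<rceil>" by (simp_all only: max.bounded_iff)
      have nb: "(1 + K) / eps \<le> real n"
      proof -
        have "(1 + K) / eps \<le> real (nat \<lceil>(1 + K) / eps\<rceil>)" by (rule real_nat_ceiling_ge)
        also have "\<dots> \<le> real n" using nc by simp
        finally show ?thesis .
      qed
      have "real m \<le> real_of_int (f n)" using `\<not> f (length w) \<le> 0` by (simp add: m_def n_def of_nat_diff)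
      also have "\<dots> \<le> K * real n ^ T" using N0[OF nN0] by simp
      finally have mb: "real m \<le> K * real n ^ T" .
      have "halt_within M w m \<le> (2 * (real n + 1) + real m) / ((2 * (real n + 1) + 1) * (real n + 1) ^ T)"
        unfolding M_def n_def by (rule halt_mach[OF T refl])
      also have "\<dots> \<le> eps" by (rule final_bound[OF T K assms(3) nb mb])
      finally show ?thesis unfolding hbm .
    qed
  qed
  show ?thesis
    by (rule exI[of _ M], intro conjI) (use rt hb in \<open>auto simp: M_def valid_mach\<close>)
qed


end
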